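(* Let $\mathrm{stat}_1,\dots,\mathrm{stat}_m$ be statistics from $\{\mathrm{lmax},\mathrm{rmax},\mathrm{lmin},\mathrm{rmin}\}$, and let $I=\sum_{\pi}t^{|\pi|}z_1^{\mathrm{stat}_1(\pi)}\cdots z_m^{\mathrm{stat}_m(\pi)}$ over irreducible separable permutations and $R$ the same sum over reducible separable permutations. Let $\phi$ be either the reverse or the complement operation, and let $\mathrm{stat}'_1,\dots,\mathrm{stat}'_m$ be statistics such that $\mathrm{stat}'_i(\phi(\pi))=\mathrm{stat}_i(\pi)$ for all permutations $\pi$ and all $i$. Then $I-z_1\cdots z_mt$ and $R+z_1\cdots z_mt$ are the generating functions $\sum_\pi t^{|\pi|}z_1^{\mathrm{stat}'_1(\pi)}\cdots z_m^{\mathrm{stat}'_m(\pi)}$ over reducible and over irreducible separable permutations, respectively.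
   Context: A permutation of length $n$ is a word $\pi=\pi_1\cdots\pi_n$ containing each element of $[n]$ exactly once; $|\pi|=n$. Reverse: $r(\pi)=\pi_n\cdots\pi_1$; complement: $c(\pi)=(n+1-\pi_1)\cdots(n+1-\pi_n)$. For $\pi$ of length $m$, $\sigma$ of length $n$: $\pi\oplus\sigma=\pi_1\cdots\pi_m(\sigma_1+m)\cdots(\sigma_n+m)$, $\pi\ominus\sigma=(\pi_1+n)\cdots(\pi_m+n)\sigma_1\cdots\sigma_n$. Separable permutations are those of length $\ge1$ obtained from $1$ by repeatedly applying $\oplus,\ominus$ (equivalently, avoiding $2413$ and $3142$). The permutation $1$ is irreducible; a permutation of length $n\ge2$ is irreducible if there is no $i$, $2\le i\le n$, such that every element of $\pi_1\cdots\pi_{i-1}$ is less than every element of $\pi_i\cdots\pi_n$; reducible means not irreducible (length $\ge2$). $\pi_i$ is a left-to-right maximum (minimum) if $\pi_i>\pi_j$ ($\pi_i<\pi_j$) for all $j<i$, a right-to-left maximum (minimum) if $\pi_i>\pi_j$ ($\pi_i<\pi_j$) for all $j>i$; $\mathrm{lmax},\mathrm{lmin},\mathrm{rmax},\mathrm{rmin}$ count these. *)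

theory Defs
  imports "HOL-Computational_Algebra.Formal_Power_Series"
begin

definition is_perm :: "nat list \<Rightarrow> bool" where
  "is_perm p \<longleftrightarrow> distinct p \<and> set p = {1..length p}"

definition reverse_perm :: "nat list \<Rightarrow> nat list" where
  "reverse_perm p = rev p"

definition complement_perm :: "nat list \<Rightarrow> nat list" where
  "complement_perm p = map (\<lambda>x. length p + 1 - x) p"

definition direct_sum :: "nat list \<Rightarrow> nat list \<Rightarrow> nat list" where
  "direct_sum p s = p @ map (\<lambda>x. x + length p) s"

definition skew_sum :: "nat list \<Rightarrow> nat list \<Rightarrow> nat list" where
  "skew_sum p s = map (\<lambda>x. x + length s) p @ s"

inductive separable :: "nat list \<Rightarrow> bool" where
  sep_one: "separable [1]"
| sep_direct: "separable p \<Longrightarrow> separable s \<Longrightarrow> separable (direct_sum p s)"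
| sep_skew: "separable p \<Longrightarrow> separable s \<Longrightarrow> separable (skew_sum p s)"

text \<open>Irreducible (1-indexed position i with 2 \<le> i \<le> n splits p into p_1..p_(i-1) and p_i..p_n).\<close>
definition irreducible_perm :: "nat list \<Rightarrow> bool" where
  "irreducible_perm p \<longleftrightarrow> length p = 1 \<or>
     (length p \<ge> 2 \<and> \<not> (\<exists>i. 2 \<le> i \<and> i \<le> length p \<and>
        (\<forall>a \<in> set (take (i - 1) p). \<forall>b \<in> set (drop (i - 1) p). a < b)))"

definition reducible_perm :: "nat list \<Rightarrow> bool" where
  "reducible_perm p \<longleftrightarrow> length p \<ge> 2 \<and> \<not> irreducible_perm p"

definition lmax :: "nat list \<Rightarrow> nat" where
  "lmax p = card {i. i < length p \<and> (\<forall>j<i. p ! j < p ! i)}"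
definition lmin :: "nat list \<Rightarrow> nat" where
  "lmin p = card {i. i < length p \<and> (\<forall>j<i. p ! i < p ! j)}"
definition rmax :: "nat list \<Rightarrow> nat" where
  "rmax p = card {i. i < length p \<and> (\<forall>j. i < j \<and> j < length p \<longrightarrow> p ! j < p ! i)}"
definition rmin :: "nat list \<Rightarrow> nat" where
  "rmin p = card {i. i < length p \<and> (\<forall>j. i < j \<and> j < length p \<longrightarrow> p ! i < p ! j)}"

text \<open>Generating function \<Sum>_{p \<in> P} t^|p| z_1^{stat_1 p} ... z_m^{stat_m p} as a formal power
  series in t whose coefficients are evaluated at real values z_1..z_m (indexed 0..m-1).\<close>
definition gen_fun :: "(nat list \<Rightarrow> bool) \<Rightarrow> nat \<Rightarrow> (nat \<Rightarrow> nat list \<Rightarrow> nat) \<Rightarrow> (nat \<Rightarrow> real) \<Rightarrow> real fps" where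
  "gen_fun P m stat z = Abs_fps (\<lambda>n. \<Sum>p \<in> {p. P p \<and> length p = n}. \<Prod>i<m. z i ^ stat i p)"

end

theory Submission
  imports Defs
begin

lemma sep_perm: "separable p \<Longrightarrow> is_perm p \<and> length p \<ge> 1"
proof (induction rule: separable.induct)
  case sep_one thus ?case by (simp add: is_perm_def)
next
  case (sep_direct a b)
  have "set (map (\<lambda>x. x + length a) b) = {length a + 1..length a + length b}"
    using sep_direct by (auto simp: is_perm_def image_iff intro!: bexI[where x="_ - length a"])
  moreover have "distinct (map (\<lambda>x. x + length a) b)" using sep_direct
    by (simp add: is_perm_def distinct_map inj_on_def)
  ultimately show ?case using sep_direct by (auto simp: is_perm_def direct_sum_def)
next
  case (sep_skew a b)
  have "set (map (\<lambda>x. x + length b) a) = {length b + 1..length a + length b}"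
    using sep_skew by (auto simp: is_perm_def image_iff intro!: bexI[where x="_ - length b"])
  moreover have "distinct (map (\<lambda>x. x + length b) a)" using sep_skew
    by (simp add: is_perm_def distinct_map inj_on_def)
  ultimately show ?case using sep_skew by (auto simp: is_perm_def skew_sum_def)
qed

lemma sep_rev: "separable p \<Longrightarrow> separable (rev p)"
proof (induction rule: separable.induct)
  case sep_one thus ?case using separable.sep_one by simp
next
  case (sep_direct a b)
  have "rev (direct_sum a b) = skew_sum (rev b) (rev a)" by (simp add: direct_sum_def skew_sum_def rev_map)
  thus ?case using sep_direct separable.sep_skew by metis
next
  case (sep_skew a b)
  have "rev (skew_sum a b) = direct_sum (rev b) (rev a)" by (simp add: direct_sum_def skew_sum_def rev_map)
  thus ?case using sep_skew separable.sep_direct by metis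
qed

lemma sep_comp: "separable p \<Longrightarrow> separable (complement_perm p)"
proof (induction rule: separable.induct)
  case sep_one thus ?case using separable.sep_one by (simp add: complement_perm_def)
next
  case (sep_direct a b)
  have pa: "set a = {1..length a}" using sep_perm[OF sep_direct(1)] by (simp add: is_perm_def)
  have pb: "set b = {1..length b}" using sep_perm[OF sep_direct(2)] by (simp add: is_perm_def)
  have "complement_perm (direct_sum a b) = skew_sum (complement_perm a) (complement_perm b)"
    using pa pb by (auto simp: direct_sum_def skew_sum_def complement_perm_def)
  thus ?case using sep_direct separable.sep_skew by metis
next
  case (sep_skew a b)
  have pa: "set a = {1..length a}" using sep_perm[OF sep_skew(1)] by (simp add: is_perm_def)
  have pb: "set b = {1..length b}" using sep_perm[OF sep_skew(2)] by (simp add: is_perm_def)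
  have "complement_perm (skew_sum a b) = direct_sum (complement_perm a) (complement_perm b)"
    using pa pb by (auto simp: direct_sum_def skew_sum_def complement_perm_def)
  thus ?case using sep_skew separable.sep_direct by metis
qed

lemma split_hd_last:
  assumes "2 \<le> i" "i \<le> length p" "\<forall>a \<in> set (take (i - 1) p). \<forall>b \<in> set (drop (i - 1) p). a < b"
  shows "hd p < last p"
proof -
  have t: "take (i - 1) p \<noteq> []" "drop (i - 1) p \<noteq> []" using assms(1,2) by (auto simp: take_eq_Nil)
  have "hd (take (i - 1) p) = hd p" using assms(1) by (simp add: hd_take)
  hence "hd p \<in> set (take (i - 1) p)" using t(1) hd_in_set by metis
  moreover have "last (drop (i - 1) p) = last p" using assms(1,2) by (simp add: last_drop)
  hence "last p \<in> set (drop (i - 1) p)" using t(2) last_in_set by metis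
  ultimately show ?thesis using assms(3) by blast
qed

lemma irr_iff: assumes "separable p" "length p \<ge> 2"
  shows "irreducible_perm p \<longleftrightarrow> last p < hd p"
  using assms
proof cases
  case sep_one thus ?thesis using assms by simp
next
  case (sep_direct a b)
  have pa: "set a = {1..length a}" "length a \<ge> 1" using sep_perm[OF sep_direct(2)] by (auto simp: is_perm_def)
  have pb: "set b = {1..length b}" "length b \<ge> 1" using sep_perm[OF sep_direct(3)] by (auto simp: is_perm_def)
  have sp: "\<forall>x \<in> set (take (length a + 1 - 1) p). \<forall>y \<in> set (drop (length a + 1 - 1) p). x < y"
    using pa pb sep_direct(1) by (auto simp: direct_sum_def)
  have "\<not> irreducible_perm p" unfolding irreducible_perm_def
    using sp pa pb sep_direct(1) assms(2) by (auto simp: direct_sum_def intro!: exI[where x="length a + 1"])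
  moreover have "hd p < last p" using split_hd_last[of "length a + 1" p] sp pa pb sep_direct(1)
    by (auto simp: direct_sum_def)
  ultimately show ?thesis by simp
next
  case (sep_skew a b)
  have pa: "set a = {1..length a}" "length a \<ge> 1" using sep_perm[OF sep_skew(2)] by (auto simp: is_perm_def)
  have pb: "set b = {1..length b}" "length b \<ge> 1" using sep_perm[OF sep_skew(3)] by (auto simp: is_perm_def)
  have ne: "a \<noteq> []" "b \<noteq> []" using pa pb by auto
  then have "hd a \<in> set a" "last b \<in> set b" by simp_all
  hence h1: "hd a \<ge> 1" "last b \<le> length b" using pa pb by auto
  hence "last p < hd p" using ne sep_skew(1)
    by (simp add: skew_sum_def hd_map hd_append last_append)
  moreover have "irreducible_perm p" unfolding irreducible_perm_def
    using split_hd_last[of _ p] calculation assms(2) by fastforce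
  ultimately show ?thesis by simp
qed

lemma phi_props:
  assumes phi: "\<phi> = reverse_perm \<or> \<phi> = complement_perm" and sp: "separable p"
  shows "separable (\<phi> p)" "length (\<phi> p) = length p" "\<phi> (\<phi> p) = p"
    "length p \<ge> 2 \<Longrightarrow> (last (\<phi> p) < hd (\<phi> p) \<longleftrightarrow> \<not> (last p < hd p))"
proof -
  have pp: "distinct p" "set p = {1..length p}" using sep_perm[OF sp] by (auto simp: is_perm_def)
  show "separable (\<phi> p)" using phi sep_rev[OF sp] sep_comp[OF sp] by (auto simp: reverse_perm_def)
  show "length (\<phi> p) = length p" using phi by (auto simp: reverse_perm_def complement_perm_def)
  show "\<phi> (\<phi> p) = p" using phi
  proof
    assume "\<phi> = complement_perm"
    thus ?thesis using pp by (simp add: complement_perm_def) (rule map_idI, auto)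
  qed (simp add: reverse_perm_def)
  assume l2: "length p \<ge> 2"
  hence ne: "p \<noteq> []" by auto
  have hl: "hd p \<noteq> last p"
  proof -
    have "p ! 0 \<noteq> p ! (length p - 1)" using pp(1) l2 by (subst nth_eq_iff_index_eq) auto
    thus ?thesis using ne by (simp add: hd_conv_nth last_conv_nth)
  qed
  have "hd p \<in> set p" "last p \<in> set p" using ne by simp_all
  hence b: "1 \<le> hd p" "hd p \<le> length p" "1 \<le> last p" "last p \<le> length p" using pp(2) by auto
  show "last (\<phi> p) < hd (\<phi> p) \<longleftrightarrow> \<not> (last p < hd p)" using phi
  proof
    assume "\<phi> = complement_perm"
    hence "last (\<phi> p) = length p + 1 - last p" "hd (\<phi> p) = length p + 1 - hd p"
      using ne by (simp_all add: complement_perm_def hd_map last_map)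
    thus ?thesis using b hl by linarith
  next
    assume "\<phi> = reverse_perm"
    hence "last (\<phi> p) = hd p" "hd (\<phi> p) = last p" using ne by (simp_all add: reverse_perm_def hd_rev last_rev)
    thus ?thesis using hl by linarith
  qed
qed

lemma irr_red:
  assumes phi: "\<phi> = reverse_perm \<or> \<phi> = complement_perm" and sp: "separable p"
    and l: "length p \<noteq> 1"
  shows "irreducible_perm p \<longleftrightarrow> reducible_perm (\<phi> p)"
proof -
  have l2: "length p \<ge> 2" using sep_perm[OF sp] l by auto
  note pr = phi_props[OF phi sp]
  have "irreducible_perm p \<longleftrightarrow> last p < hd p" using irr_iff[OF sp l2] .
  also have "\<dots> \<longleftrightarrow> \<not> (last (\<phi> p) < hd (\<phi> p))" using pr(4)[OF l2] by blast
  also have "\<dots> \<longleftrightarrow> \<not> irreducible_perm (\<phi> p)" using irr_iff[OF pr(1)] pr(2) l2 by simp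
  also have "\<dots> \<longleftrightarrow> reducible_perm (\<phi> p)" using pr(2) l2 by (simp add: reducible_perm_def)
  finally show ?thesis .
qed

lemma len1: "separable p \<Longrightarrow> length p = 1 \<Longrightarrow> p = [1]"
  using sep_perm[of p] by (cases p) (auto simp: is_perm_def)

lemma stats1: "lmax [1] = 1" "rmax [1] = 1" "lmin [1] = 1" "rmin [1] = 1"
proof -
  have e: "\<And>P. {i. i < length [1::nat] \<and> P i} = (if P 0 then {0} else {})" by auto
  show "lmax [1] = 1" "rmax [1] = 1" "lmin [1] = 1" "rmin [1] = 1"
    unfolding lmax_def rmax_def lmin_def rmin_def e by simp_all
qed

theorem theorem11:
  fixes m :: nat and stat stat' :: "nat \<Rightarrow> nat list \<Rightarrow> nat"
    and \<phi> :: "nat list \<Rightarrow> nat list" and z :: "nat \<Rightarrow> real"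
  assumes "\<forall>i<m. stat i \<in> {lmax, rmax, lmin, rmin}"
    and "\<phi> = reverse_perm \<or> \<phi> = complement_perm"
    and "\<forall>i<m. \<forall>p. is_perm p \<longrightarrow> stat' i (\<phi> p) = stat i p"
  shows "(gen_fun (\<lambda>p. separable p \<and> irreducible_perm p) m stat z
           - fps_const (\<Prod>i<m. z i) * fps_X
         = gen_fun (\<lambda>p. separable p \<and> reducible_perm p) m stat' z)
       \<and> (gen_fun (\<lambda>p. separable p \<and> reducible_perm p) m stat z
           + fps_const (\<Prod>i<m. z i) * fps_X
         = gen_fun (\<lambda>p. separable p \<and> irreducible_perm p) m stat' z)"
proof -
  note phi = assms(2)
  define A where "A n = {p. (separable p \<and> irreducible_perm p) \<and> length p = n}" for n
  define B where "B n = {p. (separable p \<and> reducible_perm p) \<and> length p = n}" for n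
  define F :: "(nat \<Rightarrow> nat list \<Rightarrow> nat) \<Rightarrow> nat list \<Rightarrow> real" where "F s p = (\<Prod>i<m. z i ^ s i p)" for s p
  have co: "fps_nth (gen_fun P m s z) n = sum (F s) {p. P p \<and> length p = n}" for P s n
    by (simp add: gen_fun_def F_def)
  have cA: "fps_nth (gen_fun (\<lambda>p. separable p \<and> irreducible_perm p) m s z) n = sum (F s) (A n)" for s n
    by (simp only: co A_def)
  have cB: "fps_nth (gen_fun (\<lambda>p. separable p \<and> reducible_perm p) m s z) n = sum (F s) (B n)" for s n
    by (simp only: co B_def)
  have st: "F stat' (\<phi> p) = F stat p" if "separable p" for p
    using assms(3) sep_perm[OF that] by (simp add: F_def)
  have swap: "sum (F stat) (A n) = sum (F stat') (B n) \<and> sum (F stat) (B n) = sum (F stat') (A n)"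
    if n1: "n \<noteq> 1" for n
  proof
    show "sum (F stat) (A n) = sum (F stat') (B n)"
    proof (rule sum.reindex_bij_witness[where i=\<phi> and j=\<phi>])
      fix a assume "a \<in> A n"
      then show "\<phi> (\<phi> a) = a" "\<phi> a \<in> B n" "F stat' (\<phi> a) = F stat a"
        using phi_props[OF phi] irr_red[OF phi] n1 st unfolding A_def B_def by auto
    next
      fix b assume "b \<in> B n"
      then show "\<phi> (\<phi> b) = b" "\<phi> b \<in> A n"
        using phi_props[OF phi, of b] irr_red[OF phi, of "\<phi> b"] n1 unfolding A_def B_def by auto
    qed
    show "sum (F stat) (B n) = sum (F stat') (A n)"
    proof (rule sum.reindex_bij_witness[where i=\<phi> and j=\<phi>])
      fix a assume "a \<in> B n"
      then show "\<phi> (\<phi> a) = a" "\<phi> a \<in> A n" "F stat' (\<phi> a) = F stat a"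
        using phi_props[OF phi, of a] irr_red[OF phi, of "\<phi> a"] n1 st unfolding A_def B_def by auto
    next
      fix b assume "b \<in> A n"
      then show "\<phi> (\<phi> b) = b" "\<phi> b \<in> B n"
        using phi_props[OF phi] irr_red[OF phi] n1 unfolding A_def B_def by auto
    qed
  qed
  have A1: "A 1 = {[1]}"
  proof (intro equalityI subsetI)
    fix p assume "p \<in> A 1"
    hence "p = [1]" using len1 unfolding A_def by blast
    thus "p \<in> {[1]}" by simp
  next
    fix p :: "nat list" assume "p \<in> {[1]}"
    hence "p = [1]" by simp
    thus "p \<in> A 1" using sep_one unfolding A_def irreducible_perm_def by simp
  qed
  have B1: "B 1 = {}" unfolding B_def by (auto simp: reducible_perm_def)
  have F1: "F s [1] = (\<Prod>i<m. z i)" if "\<forall>i<m. s i [1] = 1" for s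
    using that by (simp add: F_def)
  have s1: "\<forall>i<m. stat i [1] = 1" using assms(1) stats1 by auto
  have s1': "\<forall>i<m. stat' i [1] = 1"
  proof -
    have "\<phi> [1] = [1]" using phi by (auto simp: reverse_perm_def complement_perm_def)
    moreover have "is_perm [1]" by (simp add: is_perm_def)
    ultimately show ?thesis using assms(3) s1 by metis
  qed
  show ?thesis
  proof
    show "gen_fun (\<lambda>p. separable p \<and> irreducible_perm p) m stat z - fps_const (\<Prod>i<m. z i) * fps_X
         = gen_fun (\<lambda>p. separable p \<and> reducible_perm p) m stat' z"
    proof (rule fps_ext)
      fix n show "fps_nth (gen_fun (\<lambda>p. separable p \<and> irreducible_perm p) m stat z - fps_const (\<Prod>i<m. z i) * fps_X) n
         = fps_nth (gen_fun (\<lambda>p. separable p \<and> reducible_perm p) m stat' z) n"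
        using swap[of n] A1 B1 F1[of stat, OF s1]
        by (cases "n = 1") (simp_all add: cA cB)
    qed
    show "gen_fun (\<lambda>p. separable p \<and> reducible_perm p) m stat z + fps_const (\<Prod>i<m. z i) * fps_X
         = gen_fun (\<lambda>p. separable p \<and> irreducible_perm p) m stat' z"
    proof (rule fps_ext)
      fix n show "fps_nth (gen_fun (\<lambda>p. separable p \<and> reducible_perm p) m stat z + fps_const (\<Prod>i<m. z i) * fps_X) n
         = fps_nth (gen_fun (\<lambda>p. separable p \<and> irreducible_perm p) m stat' z) n"
        using swap[of n] A1 B1 F1[of stat', OF s1']
        by (cases "n = 1") (simp_all add: cA cB)
    qed
  qed
qed

end
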